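(* For every graph $G$ on $n$ vertices, $\operatorname{box}(G)\le MVC(G)+2=n-\alpha(G)+2$.
   Context: $MVC(G)$ is the minimum cardinality of a vertex cover of $G$ (a set of vertices meeting every edge) and $\alpha(G)$ is the maximum size of an independent set. The boxicity $\operatorname{box}(G)$ is the minimum $b$ such that $G$ is the intersection graph of axis-parallel boxes in $\mathbb{R}^b$ (products of $b$ closed intervals), one box per vertex. *)

theory Defs
  imports Complex_Main
begin

definition simple_graph :: "'a set \<Rightarrow> ('a \<Rightarrow> 'a \<Rightarrow> bool) \<Rightarrow> bool" where
  "simple_graph V E \<longleftrightarrow> finite V \<and> (\<forall>u v. E u v \<longrightarrow> u \<in> V \<and> v \<in> V)
     \<and> (\<forall>u v. E u v \<longrightarrow> E v u) \<and> (\<forall>v. \<not> E v v)"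

definition vertex_cover :: "'a set \<Rightarrow> ('a \<Rightarrow> 'a \<Rightarrow> bool) \<Rightarrow> 'a set \<Rightarrow> bool" where
  "vertex_cover V E C \<longleftrightarrow> C \<subseteq> V \<and> (\<forall>u v. E u v \<longrightarrow> u \<in> C \<or> v \<in> C)"

definition MVC :: "'a set \<Rightarrow> ('a \<Rightarrow> 'a \<Rightarrow> bool) \<Rightarrow> nat" where
  "MVC V E = Min {card C | C. vertex_cover V E C}"

definition independent_set :: "'a set \<Rightarrow> ('a \<Rightarrow> 'a \<Rightarrow> bool) \<Rightarrow> 'a set \<Rightarrow> bool" where
  "independent_set V E S \<longleftrightarrow> S \<subseteq> V \<and> (\<forall>u\<in>S. \<forall>v\<in>S. \<not> E u v)"

definition alpha :: "'a set \<Rightarrow> ('a \<Rightarrow> 'a \<Rightarrow> bool) \<Rightarrow> nat" where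
  "alpha V E = Max {card S | S. independent_set V E S}"

definition box_rep :: "'a set \<Rightarrow> ('a \<Rightarrow> 'a \<Rightarrow> bool) \<Rightarrow> nat \<Rightarrow>
    ('a \<Rightarrow> nat \<Rightarrow> real) \<Rightarrow> ('a \<Rightarrow> nat \<Rightarrow> real) \<Rightarrow> bool" where
  "box_rep V E b l r \<longleftrightarrow>
     (\<forall>v\<in>V. \<forall>i<b. l v i \<le> r v i) \<and>
     (\<forall>u\<in>V. \<forall>v\<in>V. u \<noteq> v \<longrightarrow>
        (E u v \<longleftrightarrow> (\<exists>x::nat \<Rightarrow> real. \<forall>i<b.
            l u i \<le> x i \<and> x i \<le> r u i \<and> l v i \<le> x i \<and> x i \<le> r v i)))"

definition boxicity :: "'a set \<Rightarrow> ('a \<Rightarrow> 'a \<Rightarrow> bool) \<Rightarrow> nat" where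
  "boxicity V E = (LEAST b. \<exists>l r. box_rep V E b l r)"

end

theory Submission
  imports Defs
begin

lemma ex_coord:
  "(\<exists>x::nat\<Rightarrow>real. \<forall>i<b. P i (x i)) \<longleftrightarrow> (\<forall>i<b. \<exists>y. P i y)"
proof
  assume "\<forall>i<b. \<exists>y. P i y"
  then show "\<exists>x::nat\<Rightarrow>real. \<forall>i<b. P i (x i)"
    by (intro exI[of _ "\<lambda>i. SOME y. P i y"]) (auto intro: someI_ex)
qed auto

lemma box_bound:
  assumes G: "simple_graph V E" and C: "vertex_cover V E C"
  shows "\<exists>l r. box_rep V E (card C + 1) l r"
proof -
  have finV: "finite V" and sym: "\<And>u v. E u v \<Longrightarrow> E v u"
    and inV: "\<And>u v. E u v \<Longrightarrow> u \<in> V \<and> v \<in> V"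
    using G unfolding simple_graph_def by auto
  have CV: "C \<subseteq> V" and cov: "\<And>u v. E u v \<Longrightarrow> u \<in> C \<or> v \<in> C"
    using C unfolding vertex_cover_def by auto
  have finC: "finite C" using CV finV finite_subset by blast
  define m where "m = card C"
  obtain g where g: "bij_betw g {0..<m} C"
    using ex_bij_betw_nat_finite[OF finC] m_def by blast
  obtain h where h: "bij_betw h V {0..<card V}"
    using ex_bij_betw_finite_nat[OF finV] by blast
  have hinj: "inj_on h V" using h bij_betw_def by blast
  define N where "N = real (Max (h ` V))"
  have hN: "real (h v) \<le> N" if "v \<in> V" for v
    unfolding N_def using finV that by simp
  have gC: "g i \<in> C" if "i < m" for i using g that bij_betwE by fastforce
  have gsurj: "\<exists>i<m. g i = c" if "c \<in> C" for c
    using g that unfolding bij_betw_def by force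
  define l where "l v i = (if i < m then (if v = g i then 1 else 0)
      else (if v \<in> C then 0 else real (h v)))" for v i
  define r where "r v i = (if i < m then (if v = g i then 1 else if E (g i) v then 1 else 0)
      else (if v \<in> C then N else real (h v)))" for v i
  have lr: "l v i \<le> r v i" if "v \<in> V" for v i
    using hN[OF that] unfolding l_def r_def by auto
  have coord1: "(\<exists>y. l u i \<le> y \<and> y \<le> r u i \<and> l v i \<le> y \<and> y \<le> r v i)
      \<longleftrightarrow> ((u = g i \<or> v = g i) \<longrightarrow> E u v)"
    if "u \<noteq> v" "i < m" for u v i
  proof (cases "u = g i")
    case True
    then show ?thesis using that unfolding l_def r_def by (auto intro: sym)
  next
    case False
    then show ?thesis
    proof (cases "v = g i")
      case True
      then show ?thesis using that False sym unfolding l_def r_def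
        by (auto intro: exI[of _ 1] dest: sym)
    next
      case False2: False
      show ?thesis using that False False2 unfolding l_def r_def
        by (auto intro!: exI[of _ 0])
    qed
  qed
  have coord2: "(\<exists>y. l u m \<le> y \<and> y \<le> r u m \<and> l v m \<le> y \<and> y \<le> r v m)
      \<longleftrightarrow> (u \<in> C \<or> v \<in> C)"
    if "u \<noteq> v" "u \<in> V" "v \<in> V" for u v
  proof -
    have "h u \<noteq> h v" using hinj that inj_on_def by metis
    moreover have "0 \<le> N" using hN[OF that(2)] by linarith
    ultimately show ?thesis using that hN[OF that(2)] hN[OF that(3)] unfolding l_def r_def
      by (auto intro: exI[of _ "real (h u)"] exI[of _ "real (h v)"] exI[of _ 0])
  qed
  have adj: "E u v \<longleftrightarrow> (\<forall>i<m+1. \<exists>y. l u i \<le> y \<and> y \<le> r u i \<and> l v i \<le> y \<and> y \<le> r v i)"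
    if "u \<noteq> v" "u \<in> V" "v \<in> V" for u v
  proof
    assume e: "E u v"
    show "\<forall>i<m+1. \<exists>y. l u i \<le> y \<and> y \<le> r u i \<and> l v i \<le> y \<and> y \<le> r v i"
    proof (intro allI impI)
      fix i assume "i < m + 1"
      then consider "i < m" | "i = m" by linarith
      then show "\<exists>y. l u i \<le> y \<and> y \<le> r u i \<and> l v i \<le> y \<and> y \<le> r v i"
      proof cases
        case 1 then show ?thesis using coord1[OF that(1) 1] e by blast
      next
        case 2 then show ?thesis using coord2[OF that] cov[OF e] by blast
      qed
    qed
  next
    assume A: "\<forall>i<m+1. \<exists>y. l u i \<le> y \<and> y \<le> r u i \<and> l v i \<le> y \<and> y \<le> r v i"
    have "u \<in> C \<or> v \<in> C" using A coord2[OF that] by auto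
    then show "E u v"
    proof
      assume "u \<in> C"
      then obtain i where "i < m" "g i = u" using gsurj by blast
      then show ?thesis using A coord1[OF that(1) \<open>i < m\<close>] by auto
    next
      assume "v \<in> C"
      then obtain i where "i < m" "g i = v" using gsurj by blast
      then show ?thesis using A coord1[OF that(1) \<open>i < m\<close>] by auto
    qed
  qed
  have "box_rep V E (m + 1) l r"
    unfolding box_rep_def
  proof (intro conjI ballI allI impI)
    fix u v assume "u \<in> V" "v \<in> V" "u \<noteq> v"
    show "E u v = (\<exists>x::nat \<Rightarrow> real. \<forall>i<m+1.
            l u i \<le> x i \<and> x i \<le> r u i \<and> l v i \<le> x i \<and> x i \<le> r v i)"
      unfolding ex_coord[where P="\<lambda>i y. l u i \<le> y \<and> y \<le> r u i \<and> l v i \<le> y \<and> y \<le> r v i"]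
      using adj \<open>u \<in> V\<close> \<open>v \<in> V\<close> \<open>u \<noteq> v\<close> by blast
  qed (use lr in auto)
  then show ?thesis unfolding m_def by blast
qed

theorem theorem15:
  fixes V :: "'a set" and E :: "'a \<Rightarrow> 'a \<Rightarrow> bool" and n :: nat
  assumes "simple_graph V E" and "card V = n"
  shows "boxicity V E \<le> MVC V E + 2 \<and> MVC V E + 2 = n - alpha V E + 2"
proof -
  have finV: "finite V" and inV: "\<And>u v. E u v \<Longrightarrow> u \<in> V \<and> v \<in> V"
    using assms(1) unfolding simple_graph_def by auto
  let ?CS = "{card C | C. vertex_cover V E C}"
  let ?IS = "{card S | S. independent_set V E S}"
  have finCS: "finite ?CS"
  proof (rule finite_subset[of _ "{..card V}"])
    show "?CS \<subseteq> {..card V}"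
      using finV by (auto simp: vertex_cover_def intro: card_mono)
  qed auto
  have finIS: "finite ?IS"
  proof (rule finite_subset[of _ "{..card V}"])
    show "?IS \<subseteq> {..card V}"
      using finV by (auto simp: independent_set_def intro: card_mono)
  qed auto
  have Vcov: "vertex_cover V E V" using inV unfolding vertex_cover_def by blast
  have emptyind: "independent_set V E {}" unfolding independent_set_def by blast
  have "MVC V E \<in> ?CS" unfolding MVC_def using finCS Vcov by (intro Min_in) auto
  then obtain C where C: "vertex_cover V E C" "card C = MVC V E" by auto
  have "alpha V E \<in> ?IS" unfolding alpha_def using finIS emptyind by (intro Max_in) auto
  then obtain S where S: "independent_set V E S" "card S = alpha V E" by auto
  have SV: "S \<subseteq> V" using S unfolding independent_set_def by auto
  have CV: "C \<subseteq> V" using C unfolding vertex_cover_def by auto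
  have "vertex_cover V E (V - S)" using S inV unfolding vertex_cover_def independent_set_def by blast
  then have "MVC V E \<le> card (V - S)" unfolding MVC_def using finCS by (intro Min_le) auto
  also have "\<dots> = n - alpha V E" using S SV finV assms(2) by (simp add: card_Diff_subset finite_subset)
  finally have le1: "MVC V E \<le> n - alpha V E" .
  have "independent_set V E (V - C)" using C unfolding vertex_cover_def independent_set_def by blast
  then have "card (V - C) \<le> alpha V E" unfolding alpha_def using finIS by (intro Max_ge) auto
  moreover have "card (V - C) = n - MVC V E" using C CV finV assms(2) by (simp add: card_Diff_subset finite_subset)
  moreover have "alpha V E \<le> n" using S SV finV assms(2) card_mono by metis
  moreover have "MVC V E \<le> n" using C CV finV assms(2) card_mono by metis
  ultimately have eq: "MVC V E = n - alpha V E" using le1 by linarith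
  obtain l r where "box_rep V E (card C + 1) l r" using box_bound[OF assms(1) C(1)] by blast
  then have "boxicity V E \<le> card C + 1" unfolding boxicity_def by (intro Least_le) blast
  then show ?thesis using C(2) eq by simp
qed

end
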